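(* Let $G$ be a group of order $n\ge 2$, let $g\in G$ be a non-identity element, and let $m\ge 3$ be an odd integer. Let $\Gamma$ be the digraph with vertex set $G\times G\times\mathbb{Z}_m$ in which $(x,y,i)\to(u,v,j)$ if and only if at least one of the following holds: (1) $x=u$, $i=j$ and $y\neq v$; (2) $y=v$, $i=j$ and $x\neq u$; (3) $u=xy$ and $j\in\{i+1,\dots,i+\tfrac{m-1}{2}\}$ (indices mod $m$); (4) $v=xy$ and $j\in\{i-\tfrac{m-1}{2},\dots,i-1\}$ (indices mod $m$); (5) $u=xyg$ and $j\in\{i+1,\dots,i+\tfrac{m-1}{2}\}$ (indices mod $m$); (6) $v=xyg$ and $j\in\{i-\tfrac{m-1}{2},\dots,i-1\}$ (indices mod $m$). Then $\Gamma$ is a directed strongly regular graph with parameters $(v,k,t,\lambda,\mu)=(mn^2,\ 2mn-2,\ 2n+4m-6,\ n+4m-6,\ 4m-2)$.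
   Context: A digraph here has no loops and no multiple arcs; its adjacency matrix $A$ has $A_{xy}=1$ iff $x\to y$. A directed strongly regular graph with parameters $(v,k,t,\lambda,\mu)$ is a digraph on $v$ vertices whose adjacency matrix $A$ satisfies $A^2=tI+\lambda A+\mu(J-I-A)$ and $AJ=JA=kJ$, where $I$ is the identity and $J$ the all-ones matrix. (The paper phrases the hypothesis on $g$ as "non-identity, non-idempotent", which in a group is the same as $g\ne$ identity.) *)

theory Defs
  imports "HOL-Algebra.Group"
begin

text \<open>The condition A^2 = tI + lam A + mu (J - I - A), AJ = JA = kJ is written out entrywise:
  (A^2)_{xy} is the number of z with x -> z -> y.\<close>
definition dsrg :: "'v set \<Rightarrow> ('v \<Rightarrow> 'v \<Rightarrow> bool) \<Rightarrow> nat \<Rightarrow> nat \<Rightarrow> nat \<Rightarrow> nat \<Rightarrow> nat \<Rightarrow> bool" where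
  "dsrg V A v k t lam mu \<longleftrightarrow>
     finite V \<and> card V = v \<and>
     (\<forall>x\<in>V. \<not> A x x) \<and>
     (\<forall>x\<in>V. card {y\<in>V. A x y} = k) \<and>
     (\<forall>y\<in>V. card {x\<in>V. A x y} = k) \<and>
     (\<forall>x\<in>V. \<forall>y\<in>V. card {z\<in>V. A x z \<and> A z y} =
        (if x = y then t else if A x y then lam else mu))"

definition fwd :: "nat \<Rightarrow> nat \<Rightarrow> nat \<Rightarrow> bool" where
  "fwd m i j \<longleftrightarrow> (\<exists>d. 1 \<le> d \<and> d \<le> (m - 1) div 2 \<and> j = (i + d) mod m)"

definition bwd :: "nat \<Rightarrow> nat \<Rightarrow> nat \<Rightarrow> bool" where
  "bwd m i j \<longleftrightarrow> (\<exists>d. 1 \<le> d \<and> d \<le> (m - 1) div 2 \<and> i = (j + d) mod m)"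

definition gamma_arc :: "('a, 'b) monoid_scheme \<Rightarrow> 'a \<Rightarrow> nat \<Rightarrow> 'a \<times> 'a \<times> nat \<Rightarrow> 'a \<times> 'a \<times> nat \<Rightarrow> bool" where
  "gamma_arc G g m p q = (case p of (x, y, i) \<Rightarrow> case q of (u, v, j) \<Rightarrow>
      (x = u \<and> i = j \<and> y \<noteq> v) \<or>
      (y = v \<and> i = j \<and> x \<noteq> u) \<or>
      (u = x \<otimes>\<^bsub>G\<^esub> y \<and> fwd m i j) \<or>
      (v = x \<otimes>\<^bsub>G\<^esub> y \<and> bwd m i j) \<or>
      (u = x \<otimes>\<^bsub>G\<^esub> y \<otimes>\<^bsub>G\<^esub> g \<and> fwd m i j) \<or>
      (v = x \<otimes>\<^bsub>G\<^esub> y \<otimes>\<^bsub>G\<^esub> g \<and> bwd m i j))"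

definition gamma_vertices :: "('a, 'b) monoid_scheme \<Rightarrow> nat \<Rightarrow> ('a \<times> 'a \<times> nat) set" where
  "gamma_vertices G m = carrier G \<times> carrier G \<times> {..<m}"

end

theory Submission
  imports Defs
begin


locale gam = group G for G (structure) +
  fixes g assumes gin: "g \<in> carrier G" and gne: "g \<noteq> \<one>" and fin: "finite (carrier G)"
begin

definition Fq where "Fq x y c \<longleftrightarrow> c = x \<otimes> y \<or> c = x \<otimes> y \<otimes> g"
definition Rk where "Rk x y a b \<longleftrightarrow> (x = a \<and> y \<noteq> b) \<or> (y = b \<and> x \<noteq> a)"

lemma solve_b1: "a \<in> carrier G \<Longrightarrow> b \<in> carrier G \<Longrightarrow> c \<in> carrier G \<Longrightarrow> (c = a \<otimes> b) = (b = inv a \<otimes> c)"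
  by (simp add: inv_solve_left)
lemma solve_b2: "a \<in> carrier G \<Longrightarrow> b \<in> carrier G \<Longrightarrow> c \<in> carrier G \<Longrightarrow> (c = a \<otimes> b \<otimes> g) = (b = inv a \<otimes> c \<otimes> inv g)"
proof -
  assume h: "a \<in> carrier G" "b \<in> carrier G" "c \<in> carrier G"
  have "(c = a \<otimes> b \<otimes> g) = (a \<otimes> b = c \<otimes> inv g)" using h gin by (simp add: inv_solve_right)
  also have "\<dots> = (b = inv a \<otimes> (c \<otimes> inv g))" using h gin by (auto simp add: inv_solve_left)
  also have "\<dots> = (b = inv a \<otimes> c \<otimes> inv g)" using h gin by (simp add: m_assoc)
  finally show ?thesis .
qed
lemma solve_a1: "a \<in> carrier G \<Longrightarrow> b \<in> carrier G \<Longrightarrow> c \<in> carrier G \<Longrightarrow> (c = a \<otimes> b) = (a = c \<otimes> inv b)"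
  by (simp add: inv_solve_right)
lemma solve_a2: "a \<in> carrier G \<Longrightarrow> b \<in> carrier G \<Longrightarrow> c \<in> carrier G \<Longrightarrow> (c = a \<otimes> b \<otimes> g) = (a = c \<otimes> inv g \<otimes> inv b)"
proof -
  assume h: "a \<in> carrier G" "b \<in> carrier G" "c \<in> carrier G"
  have "(c = a \<otimes> b \<otimes> g) = (c = a \<otimes> (b \<otimes> g))" using h gin by (simp add: m_assoc)
  also have "\<dots> = (a = c \<otimes> inv (b \<otimes> g))" using h gin by (simp add: inv_solve_right)
  also have "\<dots> = (a = c \<otimes> inv g \<otimes> inv b)" using h gin by (simp add: inv_mult_group m_assoc)
  finally show ?thesis .
qed

lemma ginv_ne: "inv g \<noteq> \<one>" using gin gne by (metis inv_eq_1_iff)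

lemma Fq_b: assumes "a \<in> carrier G" "c \<in> carrier G"
  shows "card {b \<in> carrier G. Fq a b c} = 2"
proof -
  have "{b \<in> carrier G. Fq a b c} = {inv a \<otimes> c, inv a \<otimes> c \<otimes> inv g}"
  proof (intro Set.set_eqI iffI)
    fix b assume "b \<in> {b \<in> carrier G. Fq a b c}"
    then show "b \<in> {inv a \<otimes> c, inv a \<otimes> c \<otimes> inv g}" using assms solve_b1[of a b c] solve_b2[of a b c]
      unfolding Fq_def by blast
  next
    fix b assume "b \<in> {inv a \<otimes> c, inv a \<otimes> c \<otimes> inv g}"
    moreover have "b \<in> carrier G" using calculation assms gin by auto
    ultimately show "b \<in> {b \<in> carrier G. Fq a b c}" using assms solve_b1[of a b c] solve_b2[of a b c]
      unfolding Fq_def by blast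
  qed
  moreover have "inv a \<otimes> c \<noteq> inv a \<otimes> c \<otimes> inv g"
    using assms gin ginv_ne l_cancel_one'[of "inv a \<otimes> c" "inv g"] by simp
  ultimately show ?thesis by simp
qed

lemma Fq_a: assumes "b \<in> carrier G" "c \<in> carrier G"
  shows "card {a \<in> carrier G. Fq a b c} = 2"
proof -
  have "{a \<in> carrier G. Fq a b c} = {c \<otimes> inv b, c \<otimes> inv g \<otimes> inv b}"
  proof (intro Set.set_eqI iffI)
    fix a assume "a \<in> {a \<in> carrier G. Fq a b c}"
    then show "a \<in> {c \<otimes> inv b, c \<otimes> inv g \<otimes> inv b}" using assms solve_a1[of a b c] solve_a2[of a b c]
      unfolding Fq_def by blast
  next
    fix a assume "a \<in> {c \<otimes> inv b, c \<otimes> inv g \<otimes> inv b}"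
    moreover have "a \<in> carrier G" using calculation assms gin by auto
    ultimately show "a \<in> {a \<in> carrier G. Fq a b c}" using assms solve_a1[of a b c] solve_a2[of a b c]
      unfolding Fq_def by blast
  qed
  moreover have "c \<otimes> inv b \<noteq> c \<otimes> inv g \<otimes> inv b"
    using assms gin ginv_ne l_cancel_one'[of "c" "inv g"] by (simp add: m_assoc)
  ultimately show ?thesis by simp
qed

lemma Fq_c: assumes "x \<in> carrier G" "y \<in> carrier G"
  shows "card {c \<in> carrier G. Fq x y c} = 2"
proof -
  have "{c \<in> carrier G. Fq x y c} = {x \<otimes> y, x \<otimes> y \<otimes> g}"
    using assms gin unfolding Fq_def by auto
  moreover have "x \<otimes> y \<noteq> x \<otimes> y \<otimes> g"
    using assms gin gne l_cancel_one'[of "x \<otimes> y" g] by simp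
  ultimately show ?thesis by simp
qed


abbreviation "n \<equiv> card (carrier G)"

lemma sF_b: "a \<in> carrier G \<Longrightarrow> c \<in> carrier G \<Longrightarrow> (\<Sum>b\<in>carrier G. of_bool (Fq a b c)) = (2::nat)"
  using Fq_b[of a c] fin by (simp add: Int_def)
lemma sF_a: "b \<in> carrier G \<Longrightarrow> c \<in> carrier G \<Longrightarrow> (\<Sum>a\<in>carrier G. of_bool (Fq a b c)) = (2::nat)"
  using Fq_a[of b c] fin by (simp add: Int_def)
lemma sF_c: "x \<in> carrier G \<Longrightarrow> y \<in> carrier G \<Longrightarrow> (\<Sum>a\<in>carrier G. of_bool (Fq x y a)) = (2::nat)"
  using Fq_c[of x y] fin by (simp add: Int_def)

lemma C1: assumes "x \<in> carrier G" "y \<in> carrier G" "w \<in> carrier G"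
  shows "(\<Sum>a\<in>carrier G. \<Sum>b\<in>carrier G. of_bool (Fq x y a \<and> Fq a b w)) = (4::nat)"
proof -
  have "(\<Sum>a\<in>carrier G. \<Sum>b\<in>carrier G. (of_bool (Fq x y a \<and> Fq a b w)::nat))
      = (\<Sum>a\<in>carrier G. of_bool (Fq x y a) * (\<Sum>b\<in>carrier G. of_bool (Fq a b w)))"
    by (simp only: of_bool_conj sum_distrib_left)
  also have "\<dots> = (\<Sum>a\<in>carrier G. of_bool (Fq x y a) * 2)"
    using assms by (intro sum.cong refl) (simp add: sF_b del: sum_of_bool_eq)
  also have "\<dots> = (\<Sum>a\<in>carrier G. of_bool (Fq x y a)) * 2"
    by (simp only: sum_distrib_right)
  also have "\<dots> = 4" using assms by (simp only: sF_c)
  finally show ?thesis .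
qed

lemma C2: assumes "x \<in> carrier G" "y \<in> carrier G" "w \<in> carrier G"
  shows "(\<Sum>a\<in>carrier G. \<Sum>b\<in>carrier G. of_bool (Fq x y b \<and> Fq a b w)) = (4::nat)"
proof -
  have "(\<Sum>a\<in>carrier G. \<Sum>b\<in>carrier G. (of_bool (Fq x y b \<and> Fq a b w)::nat))
      = (\<Sum>b\<in>carrier G. \<Sum>a\<in>carrier G. (of_bool (Fq x y b \<and> Fq a b w)::nat))"
    by (rule sum.swap)
  also have "\<dots> = (\<Sum>b\<in>carrier G. of_bool (Fq x y b) * (\<Sum>a\<in>carrier G. of_bool (Fq a b w)))"
    by (simp only: of_bool_conj sum_distrib_left)
  also have "\<dots> = (\<Sum>b\<in>carrier G. of_bool (Fq x y b) * 2)"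
    using assms by (intro sum.cong refl) (simp add: sF_a del: sum_of_bool_eq)
  also have "\<dots> = (\<Sum>b\<in>carrier G. of_bool (Fq x y b)) * 2"
    by (simp only: sum_distrib_right)
  also have "\<dots> = 4" using assms by (simp only: sF_c)
  finally show ?thesis .
qed

lemma D1: assumes "x \<in> carrier G" "y \<in> carrier G"
  shows "(\<Sum>a\<in>carrier G. \<Sum>b\<in>carrier G. of_bool (Fq x y a)) = 2 * n"
proof -
  have "(\<Sum>a\<in>carrier G. \<Sum>b\<in>carrier G. (of_bool (Fq x y a)::nat)) = n * (\<Sum>a\<in>carrier G. of_bool (Fq x y a))"
    by (simp add: sum_distrib_left del: sum_of_bool_eq)
  thus ?thesis using assms by (simp only: sF_c)
qed

lemma D2: assumes "x \<in> carrier G" "y \<in> carrier G"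
  shows "(\<Sum>a\<in>carrier G. \<Sum>b\<in>carrier G. of_bool (Fq x y b)) = 2 * n"
  using assms by (simp only: sF_c) simp

lemma D3: assumes "c \<in> carrier G"
  shows "(\<Sum>a\<in>carrier G. \<Sum>b\<in>carrier G. of_bool (Fq a b c)) = 2 * n"
proof -
  have "(\<Sum>a\<in>carrier G. \<Sum>b\<in>carrier G. (of_bool (Fq a b c)::nat)) = (\<Sum>a\<in>carrier G. 2)"
    using assms by (intro sum.cong refl) (simp add: sF_b del: sum_of_bool_eq)
  thus ?thesis by simp
qed

lemma cnt: "(\<Sum>a\<in>carrier G. \<Sum>b\<in>carrier G. of_bool (P a b)) = card {(a, b). a \<in> carrier G \<and> b \<in> carrier G \<and> P a b}"
proof -
  have "(\<Sum>a\<in>carrier G. \<Sum>b\<in>carrier G. (of_bool (P a b)::nat)) = (\<Sum>p\<in>carrier G \<times> carrier G. of_bool (case p of (a, b) \<Rightarrow> P a b))"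
    by (simp only: sum.cartesian_product split_def)
  also have "\<dots> = card ((carrier G \<times> carrier G) \<inter> {p. case p of (a, b) \<Rightarrow> P a b})"
    using fin by simp
  also have "(carrier G \<times> carrier G) \<inter> {p. case p of (a, b) \<Rightarrow> P a b} = {(a, b). a \<in> carrier G \<and> b \<in> carrier G \<and> P a b}"
    by auto
  finally show ?thesis .
qed

lemma Rk_sym: "Rk x y a b = Rk a b x y" unfolding Rk_def by auto

lemma card_row [simp]: "card ((\<lambda>b. (x, b)) ` B) = card B"
  by (rule card_image) (auto simp: inj_on_def)
lemma card_col [simp]: "card ((\<lambda>a. (a, y)) ` B) = card B"
  by (rule card_image) (auto simp: inj_on_def)

lemma D4: assumes "x \<in> carrier G" "y \<in> carrier G"
  shows "(\<Sum>a\<in>carrier G. \<Sum>b\<in>carrier G. of_bool (Rk x y a b)) = 2 * n - 2"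
proof -
  have "{(a, b). a \<in> carrier G \<and> b \<in> carrier G \<and> Rk x y a b} =
        (\<lambda>b. (x, b)) ` (carrier G - {y}) \<union> (\<lambda>a. (a, y)) ` (carrier G - {x})"
    using assms unfolding Rk_def by auto
  moreover have "card (\<dots>) = card (carrier G - {y}) + card (carrier G - {x})"
    using fin by (subst card_Un_disjoint) (auto simp: card_row card_col)
  moreover have "card (carrier G - {y}) = n - 1" "card (carrier G - {x}) = n - 1"
    using assms fin by auto
  moreover have "n \<ge> 1" using assms fin by (metis card_0_eq empty_iff less_one not_le)
  ultimately show ?thesis by (simp only: cnt)
qed

lemma D5: assumes "u \<in> carrier G" "v \<in> carrier G"
  shows "(\<Sum>a\<in>carrier G. \<Sum>b\<in>carrier G. of_bool (Rk a b u v)) = 2 * n - 2"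
  using D4[OF assms] by (simp only: Rk_sym)


lemma n_ge1: "x \<in> carrier G \<Longrightarrow> n \<ge> 1" using fin by (metis card_0_eq empty_iff less_one not_le)

lemma RR_row: assumes "x \<in> carrier G" "y \<in> carrier G" "v \<in> carrier G" "y \<noteq> v"
  shows "(\<Sum>a\<in>carrier G. \<Sum>b\<in>carrier G. of_bool (Rk x y a b \<and> Rk a b x v)) = n - 2"
proof -
  have "{(a, b). a \<in> carrier G \<and> b \<in> carrier G \<and> (Rk x y a b \<and> Rk a b x v)} =
        (\<lambda>b. (x, b)) ` (carrier G - {y, v})"
    using assms unfolding Rk_def by auto
  moreover have "card ((\<lambda>b. (x, b)) ` (carrier G - {y, v})) = card (carrier G - {y, v})"
    by (rule card_row)
  moreover have "card (carrier G - {y, v}) = n - 2"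
    using assms fin by (simp add: card_Diff_subset)
  ultimately show ?thesis by (simp only: cnt)
qed

lemma RR_col: assumes "x \<in> carrier G" "y \<in> carrier G" "u \<in> carrier G" "x \<noteq> u"
  shows "(\<Sum>a\<in>carrier G. \<Sum>b\<in>carrier G. of_bool (Rk x y a b \<and> Rk a b u y)) = n - 2"
proof -
  have "{(a, b). a \<in> carrier G \<and> b \<in> carrier G \<and> (Rk x y a b \<and> Rk a b u y)} =
        (\<lambda>a. (a, y)) ` (carrier G - {x, u})"
    using assms unfolding Rk_def by auto
  moreover have "card ((\<lambda>a. (a, y)) ` (carrier G - {x, u})) = card (carrier G - {x, u})"
    by (rule card_col)
  moreover have "card (carrier G - {x, u}) = n - 2"
    using assms fin by (simp add: card_Diff_subset)
  ultimately show ?thesis by (simp only: cnt)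
qed

lemma RR_off: assumes "x \<in> carrier G" "y \<in> carrier G" "u \<in> carrier G" "v \<in> carrier G" "x \<noteq> u" "y \<noteq> v"
  shows "(\<Sum>a\<in>carrier G. \<Sum>b\<in>carrier G. of_bool (Rk x y a b \<and> Rk a b u v)) = (2::nat)"
proof -
  have "{(a, b). a \<in> carrier G \<and> b \<in> carrier G \<and> (Rk x y a b \<and> Rk a b u v)} = {(x, v), (u, y)}"
    using assms unfolding Rk_def by auto
  moreover have "card {(x, v), (u, y)} = 2" using assms by simp
  ultimately show ?thesis by (simp only: cnt)
qed

lemma RR_diag: assumes "x \<in> carrier G" "y \<in> carrier G"
  shows "(\<Sum>a\<in>carrier G. \<Sum>b\<in>carrier G. of_bool (Rk x y a b \<and> Rk a b x y)) = 2 * n - 2"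
  using D4[OF assms] by (simp add: Rk_sym[of a b x y for a b] del: sum_of_bool_eq)

lemma RF: assumes "x \<in> carrier G" "y \<in> carrier G" "w \<in> carrier G"
  shows "(\<Sum>a\<in>carrier G. \<Sum>b\<in>carrier G. of_bool (Rk x y a b \<and> Fq a b w)) + 2 * of_bool (Fq x y w) = (4::nat)"
proof -
  have "{(a, b). a \<in> carrier G \<and> b \<in> carrier G \<and> (Rk x y a b \<and> Fq a b w)} =
        (\<lambda>b. (x, b)) ` ({b \<in> carrier G. Fq x b w} - {y}) \<union> (\<lambda>a. (a, y)) ` ({a \<in> carrier G. Fq a y w} - {x})"
    using assms unfolding Rk_def by auto
  moreover have "card (\<dots>) = card ({b \<in> carrier G. Fq x b w} - {y}) + card ({a \<in> carrier G. Fq a y w} - {x})"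
    using fin by (subst card_Un_disjoint) (auto simp: card_row card_col)
  moreover have "card ({b \<in> carrier G. Fq x b w} - {y}) = 2 - of_bool (Fq x y w)"
    using assms fin Fq_b[of x w] by (auto simp: card_Diff_singleton_if)
  moreover have "card ({a \<in> carrier G. Fq a y w} - {x}) = 2 - of_bool (Fq x y w)"
    using assms fin Fq_a[of y w] by (auto simp: card_Diff_singleton_if)
  ultimately show ?thesis by (simp only: cnt) simp
qed

lemma FR: assumes "x \<in> carrier G" "y \<in> carrier G" "u \<in> carrier G" "v \<in> carrier G"
  shows "(\<Sum>a\<in>carrier G. \<Sum>b\<in>carrier G. of_bool (Fq x y a \<and> Rk a b u v)) = (if Fq x y u then n else 2)"
proof -
  have "{(a, b). a \<in> carrier G \<and> b \<in> carrier G \<and> (Fq x y a \<and> Rk a b u v)} =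
        (\<lambda>b. (u, b)) ` {b \<in> carrier G - {v}. Fq x y u} \<union> (\<lambda>a. (a, v)) ` ({a \<in> carrier G. Fq x y a} - {u})"
    using assms unfolding Rk_def by auto
  moreover have "card (\<dots>) = card {b \<in> carrier G - {v}. Fq x y u} + card ({a \<in> carrier G. Fq x y a} - {u})"
    using fin by (subst card_Un_disjoint) (auto simp: card_row card_col)
  moreover have "card {b \<in> carrier G - {v}. Fq x y u} = (if Fq x y u then n - 1 else 0)"
  proof -
    have "{b \<in> carrier G - {v}. Fq x y u} = (if Fq x y u then carrier G - {v} else {})" by auto
    thus ?thesis using assms fin by simp
  qed
  moreover have "card ({a \<in> carrier G. Fq x y a} - {u}) = 2 - of_bool (Fq x y u)"
    using assms fin Fq_c[of x y] by (auto simp: card_Diff_singleton_if)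
  moreover have "n \<ge> 1" using n_ge1 assms by blast
  ultimately show ?thesis by (simp only: cnt) simp
qed

lemma BR: assumes "x \<in> carrier G" "y \<in> carrier G" "u \<in> carrier G" "v \<in> carrier G"
  shows "(\<Sum>a\<in>carrier G. \<Sum>b\<in>carrier G. of_bool (Fq x y b \<and> Rk a b u v)) = (if Fq x y v then n else 2)"
proof -
  have "(\<Sum>a\<in>carrier G. \<Sum>b\<in>carrier G. (of_bool (Fq x y b \<and> Rk a b u v) :: nat)) =
        (\<Sum>b\<in>carrier G. \<Sum>a\<in>carrier G. of_bool (Fq x y b \<and> Rk b a v u))"
    by (subst sum.swap) (simp add: Rk_def conj_commute disj_commute del: sum_of_bool_eq)
  also have "\<dots> = (if Fq x y v then n else 2)" using FR[of x y v u] assms by simp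
  finally show ?thesis .
qed

end


lemma modlt: "i < m \<Longrightarrow> d < m \<Longrightarrow> (i + d) mod (m::nat) = (if i + d < m then i + d else i + d - m)"
  by (simp add: le_mod_geq)

lemma T1: assumes "i < m" shows "\<not> fwd m i i" "\<not> bwd m i i"
  using assms by (auto simp: fwd_def bwd_def modlt split: if_splits)

lemma T2: assumes "odd m" "i < m" "l < m" "l \<noteq> i" shows "fwd m i l \<or> bwd m i l"
proof -
  define d where "d = (if i < l then l - i else l + m - i)"
  have d: "1 \<le> d" "d < m" using assms d_def by auto
  show ?thesis
  proof (cases "d \<le> (m - 1) div 2")
    case True
    have "l = (i + d) mod m" using assms d by (simp add: modlt) (auto simp: d_def)
    thus ?thesis using True d unfolding fwd_def by blast
  next
    case False
    have "i = (l + (m - d)) mod m" using assms d by (simp add: modlt) (auto simp: d_def)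
    moreover have "1 \<le> m - d" "m - d \<le> (m - 1) div 2" using False d assms by (auto elim!: oddE)
    ultimately show ?thesis unfolding bwd_def by blast
  qed
qed

lemma T3: assumes "odd m" "i < m" "l < m" shows "\<not> (fwd m i l \<and> bwd m i l)"
proof
  assume "fwd m i l \<and> bwd m i l"
  then obtain d1 d2 where h: "1 \<le> d1" "d1 \<le> (m - 1) div 2" "l = (i + d1) mod m"
     "1 \<le> d2" "d2 \<le> (m - 1) div 2" "i = (l + d2) mod m" unfolding fwd_def bwd_def by blast
  obtain k where m: "m = 2 * k + 1" using assms by (auto elim!: oddE)
  have "d1 < m" "d2 < m" using h m by auto
  then show False using h assms m by (simp add: modlt split: if_splits)
qed

lemma fwd_bwd: "fwd m i j = bwd m j i" unfolding fwd_def bwd_def by simp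



context gam begin

lemma arc_eq: "gamma_arc G g m (x, y, i) (a, b, l) =
   ((i = l \<and> Rk x y a b) \<or> (fwd m i l \<and> Fq x y a) \<or> (bwd m i l \<and> Fq x y b))"
  unfolding gamma_arc_def Rk_def Fq_def by auto

lemma arc_same: "i < m \<Longrightarrow> gamma_arc G g m (x, y, i) (a, b, i) = Rk x y a b"
  using T1[of i m] by (simp add: arc_eq)
lemma arc_f: "odd m \<Longrightarrow> i < m \<Longrightarrow> l < m \<Longrightarrow> fwd m i l \<Longrightarrow> gamma_arc G g m (x, y, i) (a, b, l) = Fq x y a"
  using T1[of i m] T3[of m i l] by (auto simp: arc_eq)
lemma arc_b: "odd m \<Longrightarrow> i < m \<Longrightarrow> l < m \<Longrightarrow> bwd m i l \<Longrightarrow> gamma_arc G g m (x, y, i) (a, b, l) = Fq x y b"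
  using T1[of i m] T3[of m i l] by (auto simp: arc_eq)

lemma layer_sum: "card {z \<in> gamma_vertices G m. P z} = (\<Sum>l<m. \<Sum>a\<in>carrier G. \<Sum>b\<in>carrier G. of_bool (P (a, b, l)))"
proof -
  have "card {z \<in> gamma_vertices G m. P z} = (\<Sum>z\<in>gamma_vertices G m. of_bool (P z))"
    using fin by (simp add: gamma_vertices_def Int_def)
  also have "\<dots> = (\<Sum>a\<in>carrier G. \<Sum>b\<in>carrier G. \<Sum>l<m. of_bool (P (a, b, l)))"
    unfolding gamma_vertices_def by (simp only: sum.cartesian_product') 
  also have "\<dots> = (\<Sum>a\<in>carrier G. \<Sum>l<m. \<Sum>b\<in>carrier G. of_bool (P (a, b, l)))"
    by (rule sum.cong[OF refl], rule sum.swap)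
  also have "\<dots> = (\<Sum>l<m. \<Sum>a\<in>carrier G. \<Sum>b\<in>carrier G. of_bool (P (a, b, l)))"
    by (rule sum.swap)
  finally show ?thesis .
qed

lemma sum_split1: assumes "i < m" "\<And>l. l < m \<Longrightarrow> l \<noteq> i \<Longrightarrow> f l = c"
  shows "(\<Sum>l<m. f l) = f i + (m - 1) * (c::nat)"
proof -
  have "(\<Sum>l<m. f l) = f i + (\<Sum>l\<in>{..<m} - {i}. f l)" using assms by (simp add: sum.remove)
  also have "(\<Sum>l\<in>{..<m} - {i}. f l) = (\<Sum>l\<in>{..<m} - {i}. c)" using assms by (intro sum.cong) auto
  finally show ?thesis using assms by simp
qed

lemma sum_split2: assumes "i < m" "j < m" "i \<noteq> j" "\<And>l. l < m \<Longrightarrow> l \<noteq> i \<Longrightarrow> l \<noteq> j \<Longrightarrow> f l = c"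
  shows "(\<Sum>l<m. f l) = f i + f j + (m - 2) * (c::nat)"
proof -
  have 1: "(\<Sum>l<m. f l) = f i + (\<Sum>l\<in>{..<m} - {i}. f l)" using assms by (simp add: sum.remove)
  have 2: "(\<Sum>l\<in>{..<m} - {i}. f l) = f j + (\<Sum>l\<in>{..<m} - {i} - {j}. f l)" using assms by (intro sum.remove) auto
  have 3: "(\<Sum>l\<in>{..<m} - {i} - {j}. f l) = (\<Sum>l\<in>{..<m} - {i} - {j}. c)" using assms by (intro sum.cong) auto
  have 4: "(\<Sum>l\<in>{..<m} - {i} - {j}. c) = (m - 2) * c" using assms by (simp add: card_Diff_singleton_if numeral_2_eq_2)
  show ?thesis using 1 2 3 4 by simp
qed

end


context gam begin

lemma out_deg: assumes m: "odd m" and xy: "x \<in> carrier G" "y \<in> carrier G" and i: "i < m"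
  shows "card {z \<in> gamma_vertices G m. gamma_arc G g m (x, y, i) z} = 2 * m * n - 2"
proof -
  have "(\<Sum>l<m. \<Sum>a\<in>carrier G. \<Sum>b\<in>carrier G. (of_bool (gamma_arc G g m (x, y, i) (a, b, l))::nat))
      = (\<Sum>a\<in>carrier G. \<Sum>b\<in>carrier G. of_bool (gamma_arc G g m (x, y, i) (a, b, i))) + (m - 1) * (2 * n)"
  proof (rule sum_split1[OF i])
    fix l assume l: "l < m" "l \<noteq> i"
    show "(\<Sum>a\<in>carrier G. \<Sum>b\<in>carrier G. (of_bool (gamma_arc G g m (x, y, i) (a, b, l))::nat)) = 2 * n"
    proof (cases "fwd m i l")
      case True thus ?thesis using arc_f[OF m i l(1) True] D1[OF xy] by simp
    next
      case False hence "bwd m i l" using T2[OF m i l(1) l(2)] by blast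
      thus ?thesis using arc_b[OF m i l(1)] D2[OF xy] by simp
    qed
  qed
  also have "(\<Sum>a\<in>carrier G. \<Sum>b\<in>carrier G. (of_bool (gamma_arc G g m (x, y, i) (a, b, i))::nat)) = 2 * n - 2"
    using arc_same[OF i] D4[OF xy] by simp
  finally show ?thesis using n_ge1[OF xy(1)] i by (simp add: layer_sum) (cases m; simp add: algebra_simps)
qed

lemma in_deg: assumes m: "odd m" and uv: "u \<in> carrier G" "v \<in> carrier G" and j: "j < m"
  shows "card {z \<in> gamma_vertices G m. gamma_arc G g m z (u, v, j)} = 2 * m * n - 2"
proof -
  have "(\<Sum>l<m. \<Sum>a\<in>carrier G. \<Sum>b\<in>carrier G. (of_bool (gamma_arc G g m (a, b, l) (u, v, j))::nat))
      = (\<Sum>a\<in>carrier G. \<Sum>b\<in>carrier G. of_bool (gamma_arc G g m (a, b, j) (u, v, j))) + (m - 1) * (2 * n)"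
  proof (rule sum_split1[OF j])
    fix l assume l: "l < m" "l \<noteq> j"
    show "(\<Sum>a\<in>carrier G. \<Sum>b\<in>carrier G. (of_bool (gamma_arc G g m (a, b, l) (u, v, j))::nat)) = 2 * n"
    proof (cases "fwd m l j")
      case True thus ?thesis using arc_f[OF m l(1) j True] D3[OF uv(1)] by simp
    next
      case False hence "bwd m l j" using T2[OF m l(1) j] l(2) by blast
      thus ?thesis using arc_b[OF m l(1) j] D3[OF uv(2)] by simp
    qed
  qed
  also have "(\<Sum>a\<in>carrier G. \<Sum>b\<in>carrier G. (of_bool (gamma_arc G g m (a, b, j) (u, v, j))::nat)) = 2 * n - 2"
    using arc_same[OF j] D5[OF uv] by simp
  finally show ?thesis using n_ge1[OF uv(1)] j by (simp add: layer_sum) (cases m; simp add: algebra_simps)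
qed


lemma cross: assumes m: "odd m" and G: "x \<in> carrier G" "y \<in> carrier G" "u \<in> carrier G" "v \<in> carrier G"
  and i: "i < m" and j: "j < m" and l: "l < m" "l \<noteq> i" "l \<noteq> j"
  shows "(\<Sum>a\<in>carrier G. \<Sum>b\<in>carrier G. (of_bool (gamma_arc G g m (x, y, i) (a, b, l) \<and> gamma_arc G g m (a, b, l) (u, v, j))::nat)) = 4"
proof -
  have A: "fwd m i l \<or> bwd m i l" using T2[OF m i l(1)] l by blast
  have B: "fwd m l j \<or> bwd m l j" using T2[OF m l(1) j] l by metis
  from A B show ?thesis
  proof (elim disjE)
    assume "fwd m i l" "fwd m l j" thus ?thesis using arc_f[OF m i l(1)] arc_f[OF m l(1) j] C1[OF G(1,2,3)] by simp
  next
    assume "fwd m i l" "bwd m l j" thus ?thesis using arc_f[OF m i l(1)] arc_b[OF m l(1) j] C1[OF G(1,2,4)] by simp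
  next
    assume "bwd m i l" "fwd m l j" thus ?thesis using arc_b[OF m i l(1)] arc_f[OF m l(1) j] C2[OF G(1,2,3)] by simp
  next
    assume "bwd m i l" "bwd m l j" thus ?thesis using arc_b[OF m i l(1)] arc_b[OF m l(1) j] C2[OF G(1,2,4)] by simp
  qed
qed

lemma paths: assumes m: "odd m" "m \<ge> 3" and n2: "n \<ge> 2" and G: "x \<in> carrier G" "y \<in> carrier G" "u \<in> carrier G" "v \<in> carrier G"
  and i: "i < m" and j: "j < m"
  shows "card {z \<in> gamma_vertices G m. gamma_arc G g m (x, y, i) z \<and> gamma_arc G g m z (u, v, j)} =
     (if (x, y, i) = (u, v, j) then 2 * n + 4 * m - 6
      else if gamma_arc G g m (x, y, i) (u, v, j) then n + 4 * m - 6 else 4 * m - 2)"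
proof -
  define f where "f l = (\<Sum>a\<in>carrier G. \<Sum>b\<in>carrier G. (of_bool (gamma_arc G g m (x, y, i) (a, b, l) \<and> gamma_arc G g m (a, b, l) (u, v, j))::nat))" for l
  have L: "card {z \<in> gamma_vertices G m. gamma_arc G g m (x, y, i) z \<and> gamma_arc G g m z (u, v, j)} = (\<Sum>l<m. f l)"
    unfolding f_def by (simp only: layer_sum)
  have cr: "f l = 4" if "l < m" "l \<noteq> i" "l \<noteq> j" for l
    unfolding f_def using cross[OF m(1) G i j that] .
  have n1: "n \<ge> 1" using n_ge1[OF G(1)] .
  show ?thesis
  proof (cases "i = j")
    case True
    have S: "(\<Sum>l<m. f l) = f i + (m - 1) * 4" using sum_split1[OF i, of f 4] cr True by blast
    have fi: "f i = (\<Sum>a\<in>carrier G. \<Sum>b\<in>carrier G. of_bool (Rk x y a b \<and> Rk a b u v))"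
      unfolding f_def using arc_same[OF i] True by simp
    have pq: "gamma_arc G g m (x, y, i) (u, v, j) = Rk x y u v" using arc_same[OF i] True by simp
    consider "x = u" "y = v" | "x = u" "y \<noteq> v" | "x \<noteq> u" "y = v" | "x \<noteq> u" "y \<noteq> v" by blast
    then show ?thesis
    proof cases
      case 1 thus ?thesis using L S fi RR_diag[OF G(1,2)] True n1 m by simp
    next
      case 2 thus ?thesis using L S fi RR_row[OF G(1,2,4)] True n2 m pq by (simp add: Rk_def)
    next
      case 3 thus ?thesis using L S fi RR_col[OF G(1,2,3)] True n2 m pq by (simp add: Rk_def)
    next
      case 4 thus ?thesis using L S fi RR_off[OF G] True n2 m pq by (simp add: Rk_def)
    qed
  next
    case False
    have S: "(\<Sum>l<m. f l) = f i + f j + (m - 2) * 4" using sum_split2[OF i j False, of f 4] cr by blast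
    have "fwd m i j \<or> bwd m i j" using T2[OF m(1) i j] False by metis
    then show ?thesis
    proof
      assume fw: "fwd m i j"
      have fi: "f i = (\<Sum>a\<in>carrier G. \<Sum>b\<in>carrier G. of_bool (Rk x y a b \<and> Fq a b u))"
        unfolding f_def using arc_same[OF i] arc_f[OF m(1) i j fw] by simp
      have fj: "f j = (\<Sum>a\<in>carrier G. \<Sum>b\<in>carrier G. of_bool (Fq x y a \<and> Rk a b u v))"
        unfolding f_def using arc_same[OF j] arc_f[OF m(1) i j fw] by simp
      have pq: "gamma_arc G g m (x, y, i) (u, v, j) = Fq x y u" using arc_f[OF m(1) i j fw] by simp
      show ?thesis using L S fi fj pq RF[OF G(1,2,3)] FR[OF G] False n1 m by auto
    next
      assume bw: "bwd m i j"
      have fi: "f i = (\<Sum>a\<in>carrier G. \<Sum>b\<in>carrier G. of_bool (Rk x y a b \<and> Fq a b v))"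
        unfolding f_def using arc_same[OF i] arc_b[OF m(1) i j bw] by simp
      have fj: "f j = (\<Sum>a\<in>carrier G. \<Sum>b\<in>carrier G. of_bool (Fq x y b \<and> Rk a b u v))"
        unfolding f_def using arc_same[OF j] arc_b[OF m(1) i j bw] by simp
      have pq: "gamma_arc G g m (x, y, i) (u, v, j) = Fq x y v" using arc_b[OF m(1) i j bw] by simp
      show ?thesis using L S fi fj pq RF[OF G(1,2,4)] BR[OF G] False n1 m by auto
    qed
  qed
qed

end

theorem mainTheorem2:
  fixes G :: "('a, 'b) monoid_scheme" and g :: 'a and n m :: nat
  assumes "group G" and "finite (carrier G)" and "card (carrier G) = n" and "n \<ge> 2"
    and "g \<in> carrier G" and "g \<noteq> \<one>\<^bsub>G\<^esub>"
    and "odd m" and "m \<ge> 3"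
  shows "dsrg (gamma_vertices G m) (gamma_arc G g m)
           (m * n ^ 2) (2 * m * n - 2) (2 * n + 4 * m - 6) (n + 4 * m - 6) (4 * m - 2)"
proof -
  have gm: "gam G g" using assms by (simp add: gam_def gam_axioms_def)
  have fV: "finite (gamma_vertices G m)" using assms(2) by (simp add: gamma_vertices_def)
  have cV: "card (gamma_vertices G m) = m * n ^ 2"
    using assms(2,3) by (simp add: gamma_vertices_def card_cartesian_product power2_eq_square)
  have irr: "\<forall>p\<in>gamma_vertices G m. \<not> gamma_arc G g m p p"
  proof
    fix p assume "p \<in> gamma_vertices G m"
    then obtain x y i where p: "p = (x, y, i)" "i < m" by (auto simp: gamma_vertices_def)
    show "\<not> gamma_arc G g m p p" using gam.arc_same[OF gm p(2)] p by (simp add: gam.Rk_def[OF gm])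
  qed
  have out: "\<forall>p\<in>gamma_vertices G m. card {q \<in> gamma_vertices G m. gamma_arc G g m p q} = 2 * m * n - 2"
  proof
    fix p assume "p \<in> gamma_vertices G m"
    then obtain x y i where p: "p = (x, y, i)" "x \<in> carrier G" "y \<in> carrier G" "i < m" by (auto simp: gamma_vertices_def)
    show "card {q \<in> gamma_vertices G m. gamma_arc G g m p q} = 2 * m * n - 2"
      using gam.out_deg[OF gm assms(7) p(2,3,4)] p(1) assms(3) by simp
  qed
  have inn: "\<forall>q\<in>gamma_vertices G m. card {p \<in> gamma_vertices G m. gamma_arc G g m p q} = 2 * m * n - 2"
  proof
    fix p assume "p \<in> gamma_vertices G m"
    then obtain x y i where p: "p = (x, y, i)" "x \<in> carrier G" "y \<in> carrier G" "i < m" by (auto simp: gamma_vertices_def)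
    show "card {q \<in> gamma_vertices G m. gamma_arc G g m q p} = 2 * m * n - 2"
      using gam.in_deg[OF gm assms(7) p(2,3,4)] p(1) assms(3) by simp
  qed
  have pth: "\<forall>p\<in>gamma_vertices G m. \<forall>q\<in>gamma_vertices G m.
      card {z \<in> gamma_vertices G m. gamma_arc G g m p z \<and> gamma_arc G g m z q} =
      (if p = q then 2 * n + 4 * m - 6 else if gamma_arc G g m p q then n + 4 * m - 6 else 4 * m - 2)"
  proof (intro ballI)
    fix p q assume "p \<in> gamma_vertices G m" "q \<in> gamma_vertices G m"
    then obtain x y i u v j where p: "p = (x, y, i)" "x \<in> carrier G" "y \<in> carrier G" "i < m"
      and q: "q = (u, v, j)" "u \<in> carrier G" "v \<in> carrier G" "j < m" by (auto simp: gamma_vertices_def)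
    show "card {z \<in> gamma_vertices G m. gamma_arc G g m p z \<and> gamma_arc G g m z q} =
      (if p = q then 2 * n + 4 * m - 6 else if gamma_arc G g m p q then n + 4 * m - 6 else 4 * m - 2)"
      using gam.paths[OF gm assms(7,8) _ p(2,3) q(2,3) p(4) q(4)] assms(3,4) p(1) q(1) by simp
  qed
  show ?thesis unfolding dsrg_def using fV cV irr out inn pth by blast
qed

end
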